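(* Let $G$ be a simple directed graph with asymmetric adjacency matrix $A$ having an exact D-IPS with two compressed nodes. Then the singular value decomposition of $A$ has a unique leading left singular vector $v$ and a unique leading right singular vector $w$ with $v,w\ge 0$ (entrywise), and the positive parts of $v$ and $w$ (the sets of indices with positive entries) identify the two compressed nodes.
   Context: A simple directed graph has no self-loops and no multiple edges. Its asymmetric adjacency matrix $A$ has $A_{ij}=1$ if there is a directed edge from $x_i$ to $x_j$ and $A_{ij}=0$ otherwise. A summarization of size $k$ consists of a surjective map $\phi$ from the vertex set onto $k$ compressed nodes $c_1,\dots,c_k$ (the sets $C_I=\phi^{-1}(c_I)$ partition the vertices) together with a simple directed summarized graph on $\{c_1,\dots,c_k\}$ described by compressed relation values $r_{IJ}$ with $r_{II}=0$ and $r_{IJ}r_{JI}=0$. The graph has an exact Directions Influence Preserving Structure (exact D-IPS) with $k$ compressed nodes if there is such a summarization with $\mathrm{sign}(A_{ij})=\mathrm{sign}(r_{IJ})$ for all $i\neq j$, $x_i\in C_I$, $x_j\in C_J$, where $\mathrm{sign}(0)=0$ differs from the sign of any nonzero number. *)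

theory Defs
  imports "HOL-Analysis.Analysis"
begin

text \<open>A simple directed graph on the finite vertex type 'n, given by its
(asymmetric, i.e. not necessarily symmetric) adjacency matrix A:
A i j = 1 iff there is an edge from x_i to x_j; no self-loops.\<close>
definition simple_digraph_adj :: "real^'n^'n \<Rightarrow> bool" where
  "simple_digraph_adj A \<longleftrightarrow>
     (\<forall>i j. A$i$j = 0 \<or> A$i$j = 1) \<and> (\<forall>i. A$i$i = 0)"

text \<open>A summarization of size k with compressed nodes c_0..c_(k-1) (indexed by
naturals < k): a surjective map phi onto the compressed nodes and compressed relation
values r forming a simple directed summarized graph, such that the signs of the
adjacency entries agree with the signs of the compressed relation values.\<close>
definition exact_DIPS_summary ::
  "real^'n^'n \<Rightarrow> nat \<Rightarrow> ('n \<Rightarrow> nat) \<Rightarrow> (nat \<Rightarrow> nat \<Rightarrow> real) \<Rightarrow> bool" where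
  "exact_DIPS_summary A k phi r \<longleftrightarrow>
     phi ` UNIV = {..<k} \<and>
     (\<forall>I<k. r I I = 0) \<and>
     (\<forall>I<k. \<forall>J<k. r I J * r J I = 0) \<and>
     (\<forall>i j. i \<noteq> j \<longrightarrow> sgn (A$i$j) = sgn (r (phi i) (phi j)))"

definition has_exact_DIPS :: "real^'n^'n \<Rightarrow> nat \<Rightarrow> bool" where
  "has_exact_DIPS A k \<longleftrightarrow> (\<exists>phi r. exact_DIPS_summary A k phi r)"

definition singular_triple :: "real^'n^'m \<Rightarrow> real \<Rightarrow> real^'m \<Rightarrow> real^'n \<Rightarrow> bool" where
  "singular_triple A \<sigma> u w \<longleftrightarrow>
     \<sigma> \<ge> 0 \<and> norm u = 1 \<and> norm w = 1 \<and>
     A *v w = \<sigma> *\<^sub>R u \<and> transpose A *v u = \<sigma> *\<^sub>R w"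

definition leading_singular_triple :: "real^'n^'m \<Rightarrow> real \<Rightarrow> real^'m \<Rightarrow> real^'n \<Rightarrow> bool" where
  "leading_singular_triple A \<sigma> u w \<longleftrightarrow>
     singular_triple A \<sigma> u w \<and> (\<forall>\<sigma>' u' w'. singular_triple A \<sigma>' u' w' \<longrightarrow> \<sigma>' \<le> \<sigma>)"

definition leading_left_singular_vector :: "real^'n^'m \<Rightarrow> real^'m \<Rightarrow> bool" where
  "leading_left_singular_vector A u \<longleftrightarrow> (\<exists>\<sigma> w. leading_singular_triple A \<sigma> u w)"

definition leading_right_singular_vector :: "real^'n^'m \<Rightarrow> real^'n \<Rightarrow> bool" where
  "leading_right_singular_vector A w \<longleftrightarrow> (\<exists>\<sigma> u. leading_singular_triple A \<sigma> u w)"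

definition nonneg_vec :: "real^'n \<Rightarrow> bool" where
  "nonneg_vec v \<longleftrightarrow> (\<forall>i. v$i \<ge> 0)"

definition pos_part :: "real^'n \<Rightarrow> 'n set" where
  "pos_part v = {i. v$i > 0}"

end

theory Submission
  imports Defs
begin

lemma r1_mult:
  fixes A :: "real^'n^'m" and a :: "real^'m" and b :: "real^'n"
  assumes "\<forall>i j. A$i$j = a$i * b$j"
  shows "A *v w = (b \<bullet> w) *\<^sub>R a" "transpose A *v u = (a \<bullet> u) *\<^sub>R b"
  using assms
  by (auto simp: vec_eq_iff matrix_vector_mult_def inner_vec_def transpose_def
      sum_distrib_left sum_distrib_right mult_ac)

lemma r1_bound:
  fixes A :: "real^'n^'m" and a :: "real^'m" and b :: "real^'n"
  assumes "\<forall>i j. A$i$j = a$i * b$j" "singular_triple A s u w"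
  shows "s \<le> norm a * norm b"
proof -
  have e1: "s *\<^sub>R u = (b \<bullet> w) *\<^sub>R a" and nu: "norm u = 1" and nw: "norm w = 1"
    using assms r1_mult(1)[OF assms(1)] by (auto simp: singular_triple_def)
  have "u \<bullet> u = 1" using nu by (simp add: dot_square_norm)
  hence "s = u \<bullet> (s *\<^sub>R u)" by simp
  also have "\<dots> = (b \<bullet> w) * (u \<bullet> a)" using e1 by simp
  also have "\<dots> \<le> \<bar>b \<bullet> w\<bar> * \<bar>u \<bullet> a\<bar>" by (simp add: abs_mult[symmetric])
  also have "\<dots> \<le> norm b * norm a"
    using Cauchy_Schwarz_ineq2[of b w] Cauchy_Schwarz_ineq2[of u a] nu nw
    by (simp add: mult_mono')
  finally show ?thesis by (simp add: mult.commute)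
qed

lemma r1_main:
  fixes A :: "real^'n^'m" and a :: "real^'m" and b :: "real^'n"
  assumes AB: "\<forall>i j. A$i$j = a$i * b$j" and na: "nonneg_vec a" and nb: "nonneg_vec b"
    and a0: "a \<noteq> 0" and b0: "b \<noteq> 0"
  shows "\<exists>v w.
     (leading_left_singular_vector A v \<and> nonneg_vec v) \<and>
     (\<forall>v'. leading_left_singular_vector A v' \<and> nonneg_vec v' \<longrightarrow> v' = v) \<and>
     (leading_right_singular_vector A w \<and> nonneg_vec w) \<and>
     (\<forall>w'. leading_right_singular_vector A w' \<and> nonneg_vec w' \<longrightarrow> w' = w) \<and>
     pos_part v = pos_part a \<and> pos_part w = pos_part b"
proof -
  define s0 where "s0 = norm a * norm b"
  define u0 where "u0 = (1 / norm a) *\<^sub>R a"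
  define w0 where "w0 = (1 / norm b) *\<^sub>R b"
  have pa: "norm a > 0" "norm b > 0" using a0 b0 by auto
  have bb: "b \<bullet> b = norm b * norm b" "a \<bullet> a = norm a * norm a"
    by (simp_all add: dot_square_norm power2_eq_square)
  have t0: "singular_triple A s0 u0 w0"
    unfolding singular_triple_def r1_mult[OF AB] using pa bb
    by (auto simp: s0_def u0_def w0_def)
  have lead: "leading_singular_triple A s s' s'' \<Longrightarrow> s = s0" for s s' s''
    using t0 r1_bound[OF AB] unfolding leading_singular_triple_def s0_def
    by (meson order_antisym)
  have t0l: "leading_singular_triple A s0 u0 w0"
    using t0 r1_bound[OF AB] unfolding leading_singular_triple_def s0_def by blast
  obtain ia where ia: "a$ia > 0" using a0 na unfolding nonneg_vec_def
    by (metis order_le_less vec_eq_iff zero_index)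
  obtain ib where ib: "b$ib > 0" using b0 nb unfolding nonneg_vec_def
    by (metis order_le_less vec_eq_iff zero_index)
  have uniq_u: "u = u0" if L: "leading_singular_triple A s u w" and nn: "nonneg_vec u" for s u w
  proof -
    have s: "s = s0" using lead L by blast
    have T: "singular_triple A s0 u w" using L s by (simp add: leading_singular_triple_def)
    hence e: "s0 *\<^sub>R u = (b \<bullet> w) *\<^sub>R a" and nu: "norm u = 1"
      using r1_mult(1)[OF AB] by (auto simp: singular_triple_def)
    have s0p: "s0 > 0" using pa by (simp add: s0_def)
    have "u = (1/s0) *\<^sub>R (s0 *\<^sub>R u)" using s0p by simp
    also have "\<dots> = (1/s0) *\<^sub>R ((b \<bullet> w) *\<^sub>R a)" using e by simp
    finally have ue: "u = ((b \<bullet> w) / s0) *\<^sub>R a" by simp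
    have "norm u = \<bar>b \<bullet> w\<bar> / s0 * norm a" using s0p ue by simp
    hence "\<bar>b \<bullet> w\<bar> = norm b" using nu s0p pa by (simp add: s0_def field_simps)
    moreover have "b \<bullet> w \<ge> 0"
    proof (rule ccontr)
      assume "\<not> ?thesis"
      hence "u$ia < 0" using ue ia s0p by (simp add: divide_neg_pos mult_neg_pos)
      thus False using nn by (simp add: nonneg_vec_def not_less[symmetric])
    qed
    ultimately have "b \<bullet> w = norm b" by simp
    thus ?thesis using ue pa by (simp add: u0_def s0_def)
  qed
  have uniq_w: "w = w0" if L: "leading_singular_triple A s u w" and nn: "nonneg_vec w" for s u w
  proof -
    have s: "s = s0" using lead L by blast
    have T: "singular_triple A s0 u w" using L s by (simp add: leading_singular_triple_def)
    hence e: "s0 *\<^sub>R w = (a \<bullet> u) *\<^sub>R b" and nu: "norm w = 1"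
      using r1_mult(2)[OF AB] by (auto simp: singular_triple_def)
    have s0p: "s0 > 0" using pa by (simp add: s0_def)
    have "w = (1/s0) *\<^sub>R (s0 *\<^sub>R w)" using s0p by simp
    also have "\<dots> = (1/s0) *\<^sub>R ((a \<bullet> u) *\<^sub>R b)" using e by simp
    finally have ue: "w = ((a \<bullet> u) / s0) *\<^sub>R b" by simp
    have "norm w = \<bar>a \<bullet> u\<bar> / s0 * norm b" using s0p ue by simp
    hence "\<bar>a \<bullet> u\<bar> = norm a" using nu s0p pa by (simp add: s0_def field_simps)
    moreover have "a \<bullet> u \<ge> 0"
    proof (rule ccontr)
      assume "\<not> ?thesis"
      hence "w$ib < 0" using ue ib s0p by (simp add: divide_neg_pos mult_neg_pos)
      thus False using nn by (simp add: nonneg_vec_def not_less[symmetric])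
    qed
    ultimately have "a \<bullet> u = norm a" by simp
    thus ?thesis using ue pa by (simp add: w0_def s0_def)
  qed
  have nu0: "nonneg_vec u0" "nonneg_vec w0" using na nb
    by (auto simp: nonneg_vec_def u0_def w0_def)
  have pp: "pos_part u0 = pos_part a" "pos_part w0 = pos_part b" using pa
    by (auto simp: pos_part_def u0_def w0_def zero_less_divide_iff)
  show ?thesis
    apply (rule exI[of _ u0], rule exI[of _ w0])
    using t0l nu0 pp uniq_u uniq_w
    unfolding leading_left_singular_vector_def leading_right_singular_vector_def
    by blast
qed

theorem theorem5:
  fixes A :: "real^'n^'n" and phi :: "'n \<Rightarrow> nat" and r :: "nat \<Rightarrow> nat \<Rightarrow> real"
  assumes "simple_digraph_adj A"
    and "exact_DIPS_summary A 2 phi r"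
    and "A \<noteq> 0"
  shows "\<exists>v w.
     (leading_left_singular_vector A v \<and> nonneg_vec v) \<and>
     (\<forall>v'. leading_left_singular_vector A v' \<and> nonneg_vec v' \<longrightarrow> v' = v) \<and>
     (leading_right_singular_vector A w \<and> nonneg_vec w) \<and>
     (\<forall>w'. leading_right_singular_vector A w' \<and> nonneg_vec w' \<longrightarrow> w' = w) \<and>
     {pos_part v, pos_part w} = {{i. phi i = 0}, {i. phi i = 1}}"
proof -
  have S: "\<forall>i j. A$i$j = 0 \<or> A$i$j = 1" "\<forall>i. A$i$i = 0"
    using assms(1) by (auto simp: simple_digraph_adj_def)
  have im: "phi ` UNIV = {..<2}" and r0: "r 0 0 = 0" "r 1 1 = 0" and r01: "r 0 1 * r 1 0 = 0"
    and sg: "\<forall>i j. i \<noteq> j \<longrightarrow> sgn (A$i$j) = sgn (r (phi i) (phi j))"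
    using assms(2) unfolding exact_DIPS_summary_def by auto
  have ph: "phi i = 0 \<or> phi i = 1" for i proof -
    have "phi i < 2" using im by auto
    thus ?thesis by linarith
  qed
  have "0 \<in> phi ` UNIV" "1 \<in> phi ` UNIV" using im by auto
  then obtain i0 i1 where i0: "phi i0 = 0" and i1: "phi i1 = 1" by (metis imageE)
  define a :: "real^'n" where "a = (\<chi> i. if phi i = 0 then 1 else 0)"
  define b :: "real^'n" where "b = (\<chi> i. if phi i = 1 then 1 else 0)"
  have na: "nonneg_vec a" "nonneg_vec b" by (auto simp: nonneg_vec_def a_def b_def)
  have a0: "a \<noteq> 0" using i0 by (auto simp: a_def vec_eq_iff intro!: exI[of _ i0])
  have b0: "b \<noteq> 0" using i1 by (auto simp: b_def vec_eq_iff intro!: exI[of _ i1])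
  have ppa: "pos_part a = {i. phi i = 0}" by (auto simp: pos_part_def a_def)
  have ppb: "pos_part b = {i. phi i = 1}" by (auto simp: pos_part_def b_def)
  have ent: "A$i$j = (if sgn (r (phi i) (phi j)) = 0 then 0 else 1)" for i j
  proof (cases "i = j")
    case True thus ?thesis using S r0 ph[of j] by auto
  next
    case False
    hence "sgn (A$i$j) = sgn (r (phi i) (phi j))" using sg by auto
    thus ?thesis using S(1)[rule_format, of i j] by auto
  qed
  have "r 0 1 \<noteq> 0 \<or> r 1 0 \<noteq> 0"
  proof (rule ccontr)
    assume "\<not> ?thesis"
    hence "A$i$j = 0" for i j using ent[of i j] r0 ph[of i] ph[of j] by auto
    thus False using assms(3) by (auto simp: vec_eq_iff)
  qed
  thus ?thesis
  proof
    assume h: "r 0 1 \<noteq> 0"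
    hence "r 1 0 = 0" using r01 by simp
    hence "\<forall>i j. A$i$j = a$i * b$j"
    proof (intro allI)
      fix i j
      show "A$i$j = a$i * b$j"
        using ph[of i] ph[of j] ent[of i j] h r0 \<open>r 1 0 = 0\<close>
        by (auto simp: a_def b_def sgn_eq_0_iff)
    qed
    from r1_main[OF this na a0 b0] show ?thesis unfolding ppa ppb by blast
  next
    assume h: "r 1 0 \<noteq> 0"
    hence "r 0 1 = 0" using r01 by simp
    hence "\<forall>i j. A$i$j = b$i * a$j"
    proof (intro allI)
      fix i j
      show "A$i$j = b$i * a$j"
        using ph[of i] ph[of j] ent[of i j] h r0 \<open>r 0 1 = 0\<close>
        by (auto simp: a_def b_def sgn_eq_0_iff)
    qed
    from r1_main[OF this na(2,1) b0 a0] show ?thesis unfolding ppa ppb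
      by (metis insert_commute)
  qed
qed

end
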